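(* Let $j$ be a positive integer and $a$ an indeterminate (independent of $x$). Write $G(x)=\prod_{i=0}^{j-1}\frac{1+ax^2}{1+ix}=\sum_{N\ge0}G_Nx^N$ and $H(x)=\prod_{i=1-j}^{-1}\frac{1+ix}{1+ax^2}=\sum_{N\ge0}H_Nx^N$. Then for every $N\ge0$, \[G_N=\sum_{m=0}^{[N/2]}\binom{j}{m}Q_{N-2m}(j)\,a^m,\qquad H_N=\sum_{m=0}^{[N/2]}(-1)^N\binom{1-j}{m}\sigma_{N-2m}(j)\,a^m.\]
   Context: $\sigma_0(j)=1$, $\sigma_i(j)=\sum_{1\le n_1<\cdots<n_i\le j-1}n_1n_2\cdots n_i$ for $1\le i\le j-1$, $\sigma_i(j)=0$ for $i\ge j$; $Q_0(j)=1$, $Q_k(j)=-\sum_{i=1}^k\sigma_i(j)Q_{k-i}(j)$ for $k\ge1$. $\binom{\alpha}{m}=\alpha(\alpha-1)\cdots(\alpha-m+1)/m!$ is the generalized binomial coefficient, and $[x]$ is the integer part. *)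

theory Defs
  imports "HOL-Computational_Algebra.Formal_Power_Series"
begin

definition sigma :: "nat \<Rightarrow> nat \<Rightarrow> int" where
  "sigma i j = (if i = 0 then 1
     else if i \<le> j - 1 then
       (\<Sum>S \<in> {S. S \<subseteq> {1..j-1} \<and> card S = i}. int (\<Prod>S))
     else 0)"

fun Q :: "nat \<Rightarrow> nat \<Rightarrow> int" where
  "Q 0 j = 1"
| "Q (Suc k) j = - (\<Sum>i \<in> {1..Suc k}. sigma i j * Q (Suc k - i) j)"

end

theory Submission
  imports Defs
begin

unbundle fps_syntax

lemma bpow_nth:
  fixes c :: "'a::field_char_0"
  shows "((fps_const c * fps_X ^ 2) ^ i) $ n = (if n = 2*i then c ^ i else 0)"
  by (simp add: power_mult_distrib fps_const_power power_mult[symmetric])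

lemma comp_nth:
  fixes c :: "'a::field_char_0"
  shows "(f oo (fps_const c * fps_X ^ 2)) $ n = (if even n then f $ (n div 2) * c ^ (n div 2) else 0)"
proof -
  have "(f oo (fps_const c * fps_X ^ 2)) $ n = (\<Sum>i=0..n. f $ i * (if n = 2*i then c ^ i else 0))"
    by (simp add: fps_compose_nth bpow_nth)
  also have "\<dots> = (\<Sum>i=0..n. if i = n div 2 \<and> even n then f $ i * c ^ i else 0)"
    by (rule sum.cong) auto
  also have "\<dots> = (if even n then f $ (n div 2) * c ^ (n div 2) else 0)"
    by (cases "even n") (auto simp: sum.delta')
  finally show ?thesis .
qed

lemma binc_nth:
  fixes c :: "'a::field_char_0"
  shows "(fps_binomial \<alpha> oo (fps_const c * fps_X ^ 2)) $ n = (if even n then (\<alpha> gchoose (n div 2)) * c ^ (n div 2) else 0)"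
  by (simp add: comp_nth)

lemma binc_nat:
  fixes c :: "'a::field_char_0"
  shows "fps_binomial (of_nat n) oo (fps_const c * fps_X ^ 2) = (1 + fps_const c * fps_X ^ 2) ^ n"
proof -
  have z: "(fps_const c * fps_X ^ 2) $ 0 = 0" by simp
  show ?thesis
    unfolding fps_binomial_of_nat fps_compose_power[OF z, symmetric]
    by (simp add: fps_compose_add_distrib z)
qed

lemma binc_inv:
  fixes c :: "'a::field_char_0"
  shows "fps_binomial (- of_nat n) oo (fps_const c * fps_X ^ 2) = inverse ((1 + fps_const c * fps_X ^ 2) ^ n)"
proof -
  have z: "(fps_const c * fps_X ^ 2) $ 0 = 0" by simp
  have "(1 + fps_const c * fps_X ^ 2) ^ n * (fps_binomial (- of_nat n) oo (fps_const c * fps_X ^ 2)) = 1"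
    unfolding binc_nat[symmetric] fps_compose_mult_distrib[OF z, symmetric] fps_binomial_add_mult[symmetric]
    by simp
  then show ?thesis by (rule fps_inverse_unique[symmetric])
qed

lemma fps_const_prod':
  "finite A \<Longrightarrow> (\<Prod>i\<in>A. fps_const (f i)) = fps_const (\<Prod>i\<in>A. f i :: 'a::comm_ring_1)"
  by (induct A rule: finite_induct) (simp_all add: fps_const_mult)

lemma esym:
  fixes c :: "nat \<Rightarrow> 'a::field_char_0"
  assumes "finite A"
  shows "(\<Prod>i\<in>A. 1 + fps_const (c i) * fps_X) $ k = (\<Sum>S\<in>{S. S \<subseteq> A \<and> card S = k}. \<Prod>i\<in>S. c i)"
proof -
  have "(\<Prod>i\<in>A. 1 + fps_const (c i) * fps_X) = (\<Prod>i\<in>A. fps_const (c i) * fps_X + 1)"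
    by (simp add: add.commute)
  also have "\<dots> = (\<Sum>B\<in>Pow A. (\<Prod>i\<in>B. fps_const (c i) * fps_X) * (\<Prod>i\<in>A-B. 1))"
    by (rule prod_add[OF assms])
  also have "\<dots> = (\<Sum>B\<in>Pow A. (\<Prod>i\<in>B. fps_const (c i)) * fps_X ^ card B)"
    by (simp add: prod.distrib)
  also have "\<dots> = (\<Sum>B\<in>Pow A. fps_const (\<Prod>i\<in>B. c i) * fps_X ^ card B)"
    by (intro sum.cong refl) (simp add: fps_const_prod' finite_subset[OF _ assms])
  finally have "(\<Prod>i\<in>A. 1 + fps_const (c i) * fps_X) $ k = (\<Sum>B\<in>Pow A. if card B = k then (\<Prod>i\<in>B. c i) else 0)"
    by (auto simp: fps_sum_nth intro!: sum.cong)
  also have "\<dots> = (\<Sum>B\<in>{B\<in>Pow A. card B = k}. \<Prod>i\<in>B. c i)"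
    by (rule sum.inter_filter[symmetric]) (use assms in simp)
  also have "{B\<in>Pow A. card B = k} = {S. S \<subseteq> A \<and> card S = k}" by auto
  finally show ?thesis .
qed

lemma sigma_eq:
  "(of_int (sigma k j) :: 'a::field_char_0) = (\<Sum>S\<in>{S. S \<subseteq> {1..j-1} \<and> card S = k}. \<Prod>i\<in>S. of_nat i)"
proof (cases "k = 0")
  case True
  have "{S. S \<subseteq> {1..j-1} \<and> card S = k} = {{}}"
    using True by (auto dest: finite_subset)
  then show ?thesis using True by (simp add: sigma_def)
next
  case False
  show ?thesis
  proof (cases "k \<le> j - 1")
    case True
    then show ?thesis using False by (simp add: sigma_def of_nat_prod)
  next
    case F2: False
    have "{S. S \<subseteq> {1..j-1} \<and> card S = k} = {}"
    proof -
      have "card S \<le> j - 1" if "S \<subseteq> {1..j-1}" for S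
        using card_mono[OF _ that] by simp
      then show ?thesis using F2 by fastforce
    qed
    then have e: "(\<Sum>S\<in>{S. S \<subseteq> {1..j-1} \<and> card S = k}. \<Prod>i\<in>S. (of_nat i :: 'a)) = 0"
      by (simp only: sum.empty)
    have "sigma k j = 0" using False F2 by (simp add: sigma_def)
    then show ?thesis using e by (metis of_int_0)
  qed
qed

lemma P_nth:
  "(\<Prod>i\<in>{1..j-1}. 1 + of_nat i * fps_X :: 'a::field_char_0 fps) $ k = of_int (sigma k j)"
  using esym[of "{1..j-1}" "\<lambda>i. of_nat i :: 'a" k] by (simp add: sigma_eq fps_of_nat)

lemma Pm_nth:
  "(\<Prod>i\<in>{1..j-1}. 1 - of_nat i * fps_X :: 'a::field_char_0 fps) $ k = (-1) ^ k * of_int (sigma k j)"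
proof -
  have "(\<Prod>i\<in>{1..j-1}. 1 - of_nat i * fps_X :: 'a fps) = (\<Prod>i\<in>{1..j-1}. 1 + fps_const (- of_nat i) * fps_X)"
  proof (intro prod.cong refl)
    fix i
    have e: "fps_const (- of_nat i :: 'a) = - of_nat i" by (simp add: fps_of_nat[symmetric])
    show "1 - of_nat i * fps_X = 1 + fps_const (- of_nat i :: 'a) * fps_X"
      unfolding e by simp
  qed
  then have "(\<Prod>i\<in>{1..j-1}. 1 - of_nat i * fps_X :: 'a fps) $ k = (\<Sum>S\<in>{S. S \<subseteq> {1..j-1} \<and> card S = k}. \<Prod>i\<in>S. - (of_nat i :: 'a))"
    by (simp add: esym)
  also have "\<dots> = (\<Sum>S\<in>{S. S \<subseteq> {1..j-1} \<and> card S = k}. (-1) ^ k * (\<Prod>i\<in>S. (of_nat i :: 'a)))"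
  proof (rule sum.cong)
    fix S assume "S \<in> {S. S \<subseteq> {1..j-1} \<and> card S = k}"
    then have "card S = k" by auto
    have "(\<Prod>i\<in>S. - (of_nat i :: 'a)) = (\<Prod>i\<in>S. (-1) * (of_nat i :: 'a))" by simp
    also have "\<dots> = (-1) ^ card S * (\<Prod>i\<in>S. (of_nat i :: 'a))" by (simp only: prod.distrib prod_constant)
    finally show "(\<Prod>i\<in>S. - (of_nat i :: 'a)) = (-1) ^ k * (\<Prod>i\<in>S. (of_nat i :: 'a))" using \<open>card S = k\<close> by simp
  qed simp
  also have "\<dots> = (-1) ^ k * of_int (sigma k j)"
    by (simp add: sigma_eq sum_distrib_left)
  finally show ?thesis .
qed

lemma R_inv:
  "inverse (\<Prod>i\<in>{1..j-1}. 1 + of_nat i * fps_X :: 'a::field_char_0 fps) = Abs_fps (\<lambda>k. of_int (Q k j))"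
proof (rule fps_inverse_unique)
  show "(\<Prod>i\<in>{1..j-1}. 1 + of_nat i * fps_X :: 'a fps) * Abs_fps (\<lambda>k. of_int (Q k j)) = 1"
  proof (rule fps_ext)
    fix n
    show "((\<Prod>i\<in>{1..j-1}. 1 + of_nat i * fps_X :: 'a fps) * Abs_fps (\<lambda>k. of_int (Q k j))) $ n = (1 :: 'a fps) $ n"
    proof (cases n)
      case 0
      have "(\<Prod>i\<in>{1..j-1}. 1 + of_nat i * fps_X :: 'a fps) $ 0 = of_int (sigma 0 j)" by (rule P_nth)
      then show ?thesis using 0 by (simp add: fps_mult_nth sigma_def)
    next
      case (Suc k)
      have "((\<Prod>i\<in>{1..j-1}. 1 + of_nat i * fps_X :: 'a fps) * Abs_fps (\<lambda>k. of_int (Q k j))) $ n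
          = (\<Sum>i=0..Suc k. of_int (sigma i j * Q (Suc k - i) j))"
        unfolding fps_mult_nth P_nth Suc by simp
      also have "\<dots> = of_int (\<Sum>i=0..Suc k. sigma i j * Q (Suc k - i) j)"
        by (simp only: of_int_sum)
      also have "(\<Sum>i=0..Suc k. sigma i j * Q (Suc k - i) j) = Q (Suc k) j + (\<Sum>i=Suc 0..Suc k. sigma i j * Q (Suc k - i) j)"
        by (simp add: sum.atLeast_Suc_atMost sigma_def)
      also have "\<dots> = 0"
        by (simp only: Q.simps One_nat_def)
      finally show ?thesis using Suc by simp
    qed
  qed
qed

lemma even_sum:
  fixes F :: "nat \<Rightarrow> 'a::comm_monoid_add"
  shows "(\<Sum>i=0..N. if even i then F i else 0) = (\<Sum>m=0..N div 2. F (2*m))"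
proof -
  have "(\<Sum>i=0..N. if even i then F i else 0) = sum F {i\<in>{0..N}. even i}"
    by (rule sum.inter_filter[symmetric]) simp
  also have "{i\<in>{0..N}. even i} = (\<lambda>m. 2*m) ` {0..N div 2}"
    by (auto simp: image_iff elim!: evenE)
  also have "sum F \<dots> = (\<Sum>m=0..N div 2. F (2*m))"
    by (subst sum.reindex) (auto simp: inj_on_def)
  finally show ?thesis .
qed

lemma prod_inverse_fps:
  fixes f :: "'b \<Rightarrow> 'a::field fps"
  shows "finite A \<Longrightarrow> (\<Prod>i\<in>A. inverse (f i)) = inverse (\<Prod>i\<in>A. f i)"
  by (induct A rule: finite_induct) (simp_all add: fps_inverse_mult)

lemma neg_pow_eq:
  assumes "2*m \<le> N"
  shows "(-1::'a::comm_ring_1) ^ (N - 2*m) = (-1) ^ N"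
proof -
  have "(-1::'a) ^ N = (-1) ^ (N - 2*m + 2*m)" using assms by simp
  also have "\<dots> = (-1) ^ (N - 2*m)" by (simp add: power_add power_mult)
  finally show ?thesis by simp
qed

theorem lemma2p3:
  fixes a :: "'a :: field_char_0" and j :: nat
  assumes "j \<ge> 1"
  defines "G \<equiv> (\<Prod>i<j. (1 + fps_const a * fps_X ^ 2) / (1 + of_nat i * fps_X))"
      and "H \<equiv> (\<Prod>i \<in> {1 - int j .. -1}. (1 + of_int i * fps_X) / (1 + fps_const a * fps_X ^ 2))"
  shows "\<forall>N. fps_nth G N = (\<Sum>m = 0..N div 2. of_nat (j choose m) * of_int (Q (N - 2*m) j) * a ^ m)
             \<and> fps_nth H N = (\<Sum>m = 0..N div 2. (-1) ^ N * (of_int (1 - int j) gchoose m)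
                                     * of_int (sigma (N - 2*m) j) * a ^ m)"
proof (intro allI conjI)
  fix N
  define D where "D = 1 + fps_const a * fps_X ^ 2"
  define b where "b = fps_const a * fps_X ^ 2"
  define R where "R = Abs_fps (\<lambda>k. of_int (Q k j) :: 'a)"
  define P where "P = (\<Prod>i\<in>{1..j-1}. 1 + of_nat i * fps_X :: 'a fps)"
  define Pm where "Pm = (\<Prod>i\<in>{1..j-1}. 1 - of_nat i * fps_X :: 'a fps)"
  have D0: "D $ 0 = 1" by (simp add: D_def)
  have "G = (\<Prod>i<j. D * inverse (1 + of_nat i * fps_X))"
    unfolding G_def D_def[symmetric]
    by (intro prod.cong refl fps_divide_unit) simp
  also have "\<dots> = D ^ j * inverse (\<Prod>i<j. 1 + of_nat i * fps_X)"
    by (simp add: prod.distrib prod_inverse_fps)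
  also have "(\<Prod>i<j. 1 + of_nat i * fps_X :: 'a fps) = P"
  proof -
    have "{..<j} = insert 0 {1..j-1}" using assms by auto
    then show ?thesis unfolding P_def by simp
  qed
  also have "inverse P = R" unfolding P_def R_def by (rule R_inv)
  also have "D ^ j = fps_binomial (of_nat j) oo b" unfolding D_def b_def by (rule binc_nat[symmetric])
  finally have G: "G = (fps_binomial (of_nat j) oo b) * R" .
  have "G $ N = (\<Sum>i=0..N. if even i then (of_nat j gchoose (i div 2)) * a ^ (i div 2) * of_int (Q (N - i) j) else 0)"
    unfolding G fps_mult_nth b_def binc_nth R_def by (intro sum.cong refl) auto
  also have "\<dots> = (\<Sum>m=0..N div 2. (of_nat j gchoose m) * a ^ m * of_int (Q (N - 2*m) j))"
    by (subst even_sum) simp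
  also have "\<dots> = (\<Sum>m = 0..N div 2. of_nat (j choose m) * of_int (Q (N - 2*m) j) * a ^ m)"
    by (intro sum.cong refl) (simp add: binomial_gbinomial)
  finally show "G $ N = (\<Sum>m = 0..N div 2. of_nat (j choose m) * of_int (Q (N - 2*m) j) * a ^ m)" .

  have img: "{1 - int j .. -1} = (\<lambda>k. - int k) ` {1..j-1}"
  proof
    show "{1 - int j .. -1} \<subseteq> (\<lambda>k. - int k) ` {1..j-1}"
    proof
      fix x assume "x \<in> {1 - int j .. -1}"
      then have "x = - int (nat (-x))" "nat (-x) \<in> {1..j-1}" by auto
      then show "x \<in> (\<lambda>k. - int k) ` {1..j-1}" by blast
    qed
  qed auto
  have "H = (\<Prod>k\<in>{1..j-1}. (1 + of_int (- int k) * fps_X) / D)"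
    unfolding H_def img D_def by (rule prod.reindex[unfolded o_def]) (auto simp: inj_on_def)
  also have "\<dots> = (\<Prod>k\<in>{1..j-1}. (1 - of_nat k * fps_X) * inverse D)"
  proof (intro prod.cong refl)
    fix k
    have e: "(1 + of_int (- int k) * fps_X :: 'a fps) = 1 - of_nat k * fps_X" by simp
    show "(1 + of_int (- int k) * fps_X) / D = (1 - of_nat k * fps_X) * inverse D"
      unfolding e by (rule fps_divide_unit) (simp add: D0)
  qed
  also have "\<dots> = Pm * inverse (D ^ (j - 1))"
    by (simp add: prod.distrib Pm_def fps_inverse_power)
  also have "inverse (D ^ (j - 1)) = fps_binomial (- of_nat (j-1)) oo b"
    unfolding D_def b_def by (rule binc_inv[symmetric])
  finally have H: "H = (fps_binomial (- of_nat (j-1)) oo b) * Pm" by (simp add: mult.commute)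
  have al: "(of_int (1 - int j) :: 'a) = - of_nat (j - 1)" using assms by (simp add: of_nat_diff)
  have "H $ N = (\<Sum>i=0..N. if even i then (of_int (1 - int j) gchoose (i div 2)) * a ^ (i div 2) * ((-1) ^ (N - i) * of_int (sigma (N - i) j)) else 0)"
    unfolding H fps_mult_nth b_def binc_nth Pm_def Pm_nth al by (intro sum.cong refl) auto
  also have "\<dots> = (\<Sum>m=0..N div 2. (of_int (1 - int j) gchoose m) * a ^ m * ((-1) ^ (N - 2*m) * of_int (sigma (N - 2*m) j)))"
    by (subst even_sum) simp
  also have "\<dots> = (\<Sum>m = 0..N div 2. (-1) ^ N * (of_int (1 - int j) gchoose m) * of_int (sigma (N - 2*m) j) * a ^ m)"
  proof (intro sum.cong refl)
    fix m assume "m \<in> {0..N div 2}"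
    then have "2*m \<le> N" by auto
    then show "(of_int (1 - int j) gchoose m) * a ^ m * ((-1) ^ (N - 2*m) * of_int (sigma (N - 2*m) j))
        = (-1) ^ N * (of_int (1 - int j) gchoose m) * of_int (sigma (N - 2*m) j) * (a ^ m :: 'a)"
      by (simp add: neg_pow_eq)
  qed
  finally show "H $ N = (\<Sum>m = 0..N div 2. (-1) ^ N * (of_int (1 - int j) gchoose m) * of_int (sigma (N - 2*m) j) * a ^ m)" .
qed

end
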